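(* Let $\Gamma$ be a distance-regular graph with classical parameters $(D,b,\alpha,\beta)$ such that $b\ge 2$ and $D\ge 3$, which is geometric with respect to a set $\mathcal C$ of Delsarte cliques (the members of $\mathcal C$ are called lines). Let $r=[D]$. If $\beta > (r-\alpha-1)\alpha b + \alpha$, then for every vertex $x$ and line $\ell$ with $d(x,\ell)=1$ and every two vertices $y_1,y_2$ on $\ell$ with $d(x,y_1)=d(x,y_2)=2$, we have $[x,y_1]=[x,y_2]$.
   Context: Distance-regular graph with intersection numbers $b_i,c_i$, valency $k=b_0$. For integer $b\ne1$, $[j]=\frac{b^j-1}{b-1}$. Classical parameters $(D,b,\alpha,\beta)$: diameter $D$, $b_i=([D]-[i])(\beta-\alpha[i])$ ($0\le i\le D-1$), $c_i=[i](1+\alpha[i-1])$ ($1\le i\le D$). A Delsarte clique is a clique with $1+\frac{k}{-\theta_{\min}}$ vertices, $\theta_{\min}$ the smallest adjacency eigenvalue. $\Gamma$ is geometric with respect to a set $\mathcal C$ of Delsarte cliques if every edge lies in exactly one member of $\mathcal C$. $d(x,\ell)=\min\{d(x,y): y\in\ell\}$. For vertices $x,y$ at distance 2, $[x,y]$ is the set of lines $\ell\in\mathcal C$ through $x$ such that $d(y,u)\le 2$ for all $u\in\ell$. *)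

theory Defs
  imports Main "HOL-Library.Multiset" Complex_Main
begin

definition simple_graph :: "'a set \<Rightarrow> ('a \<Rightarrow> 'a \<Rightarrow> bool) \<Rightarrow> bool" where
  "simple_graph V E \<longleftrightarrow> finite V \<and> (\<forall>x y. E x y \<longrightarrow> x \<in> V \<and> y \<in> V) \<and>
     (\<forall>x y. E x y \<longrightarrow> E y x) \<and> (\<forall>x. \<not> E x x)"

definition gdist :: "('a \<Rightarrow> 'a \<Rightarrow> bool) \<Rightarrow> 'a \<Rightarrow> 'a \<Rightarrow> nat" where
  "gdist E x y = (LEAST n. (E ^^ n) x y)"

definition connected_graph :: "'a set \<Rightarrow> ('a \<Rightarrow> 'a \<Rightarrow> bool) \<Rightarrow> bool" where
  "connected_graph V E \<longleftrightarrow> (\<forall>x\<in>V. \<forall>y\<in>V. \<exists>n. (E ^^ n) x y)"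

definition diameter_is :: "'a set \<Rightarrow> ('a \<Rightarrow> 'a \<Rightarrow> bool) \<Rightarrow> nat \<Rightarrow> bool" where
  "diameter_is V E D \<longleftrightarrow> (\<forall>x\<in>V. \<forall>y\<in>V. gdist E x y \<le> D) \<and>
     (\<exists>x\<in>V. \<exists>y\<in>V. gdist E x y = D)"

definition distance_regular ::
  "'a set \<Rightarrow> ('a \<Rightarrow> 'a \<Rightarrow> bool) \<Rightarrow> nat \<Rightarrow> (nat \<Rightarrow> nat) \<Rightarrow> (nat \<Rightarrow> nat) \<Rightarrow> bool" where
  "distance_regular V E D bi ci \<longleftrightarrow> simple_graph V E \<and> connected_graph V E \<and> diameter_is V E D \<and>
     (\<forall>x\<in>V. \<forall>y\<in>V. \<forall>i. gdist E x y = i \<longrightarrow>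
        (i < D \<longrightarrow> card {z\<in>V. E y z \<and> gdist E x z = i + 1} = bi i) \<and>
        (1 \<le> i \<and> i \<le> D \<longrightarrow> card {z\<in>V. E y z \<and> gdist E x z = i - 1} = ci i))"

definition gbr :: "int \<Rightarrow> nat \<Rightarrow> real" where
  "gbr b j = (real_of_int b ^ j - 1) / (real_of_int b - 1)"

definition classical_parameters ::
  "nat \<Rightarrow> (nat \<Rightarrow> nat) \<Rightarrow> (nat \<Rightarrow> nat) \<Rightarrow> int \<Rightarrow> real \<Rightarrow> real \<Rightarrow> bool" where
  "classical_parameters D bi ci b \<alpha> \<beta> \<longleftrightarrow> b \<noteq> 1 \<and>
     (\<forall>i<D. real (bi i) = (gbr b D - gbr b i) * (\<beta> - \<alpha> * gbr b i)) \<and>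
     (\<forall>i. 1 \<le> i \<and> i \<le> D \<longrightarrow> real (ci i) = gbr b i * (1 + \<alpha> * gbr b (i - 1)))"

definition adj_eigenvalue :: "'a set \<Rightarrow> ('a \<Rightarrow> 'a \<Rightarrow> bool) \<Rightarrow> real \<Rightarrow> bool" where
  "adj_eigenvalue V E \<theta> \<longleftrightarrow> (\<exists>f :: 'a \<Rightarrow> real. (\<exists>x\<in>V. f x \<noteq> 0) \<and>
     (\<forall>x\<in>V. (\<Sum>y\<in>{y\<in>V. E x y}. f y) = \<theta> * f x))"

definition theta_min :: "'a set \<Rightarrow> ('a \<Rightarrow> 'a \<Rightarrow> bool) \<Rightarrow> real" where
  "theta_min V E = Min {\<theta>. adj_eigenvalue V E \<theta>}"

definition is_clique :: "'a set \<Rightarrow> ('a \<Rightarrow> 'a \<Rightarrow> bool) \<Rightarrow> 'a set \<Rightarrow> bool" where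
  "is_clique V E K \<longleftrightarrow> K \<subseteq> V \<and> (\<forall>x\<in>K. \<forall>y\<in>K. x \<noteq> y \<longrightarrow> E x y)"

definition delsarte_clique :: "'a set \<Rightarrow> ('a \<Rightarrow> 'a \<Rightarrow> bool) \<Rightarrow> nat \<Rightarrow> 'a set \<Rightarrow> bool" where
  "delsarte_clique V E k K \<longleftrightarrow> is_clique V E K \<and>
     real (card K) = 1 + real k / (- theta_min V E)"

definition geometric :: "'a set \<Rightarrow> ('a \<Rightarrow> 'a \<Rightarrow> bool) \<Rightarrow> nat \<Rightarrow> 'a set set \<Rightarrow> bool" where
  "geometric V E k \<C> \<longleftrightarrow> (\<forall>K\<in>\<C>. delsarte_clique V E k K) \<and>
     (\<forall>x y. E x y \<longrightarrow> (\<exists>!K. K \<in> \<C> \<and> x \<in> K \<and> y \<in> K))"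

definition dist_set :: "('a \<Rightarrow> 'a \<Rightarrow> bool) \<Rightarrow> 'a \<Rightarrow> 'a set \<Rightarrow> nat" where
  "dist_set E x L = Min ((gdist E x) ` L)"

text \<open>[x,y]: lines through x all of whose vertices are within distance 2 of y.\<close>
definition line_set :: "('a \<Rightarrow> 'a \<Rightarrow> bool) \<Rightarrow> 'a set set \<Rightarrow> 'a \<Rightarrow> 'a \<Rightarrow> 'a set set" where
  "line_set E \<C> x y = {L\<in>\<C>. x \<in> L \<and> (\<forall>u\<in>L. gdist E y u \<le> 2)}"

end

theory Submission
  imports Defs "HOL-Computational_Algebra.Polynomial"
begin
primrec pw :: "(nat \<Rightarrow> real) \<Rightarrow> (nat \<Rightarrow> real) \<Rightarrow> nat \<Rightarrow> real" where
  "pw Bs Cs 0 = 1"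
| "pw Bs Cs (Suc i) = pw Bs Cs i * Bs i / Cs (Suc i)"

lemma pw_pos:
  assumes "\<forall>i<n. Bs i > 0" "\<forall>i. 1 \<le> i \<and> i \<le> n \<longrightarrow> Cs i > 0"
  shows "i \<le> n \<Longrightarrow> pw Bs Cs i > 0"
proof (induction i)
  case 0 then show ?case by simp
next
  case (Suc i)
  then show ?case using assms by (simp add: Suc_le_eq)
qed

lemma seq_bound:
  fixes Bs Cs As u y :: "nat \<Rightarrow> real" and n :: nat and lam th :: real
  assumes Bpos: "\<forall>i<n. Bs i > 0" and Cpos: "\<forall>i. 1 \<le> i \<and> i \<le> n \<longrightarrow> Cs i > 0"
    and C0: "Cs 0 = 0" and Bn: "Bs n = 0"
    and ueq: "\<forall>i\<le>n. Cs i * u (i-1) + As i * u i + Bs i * u (Suc i) = lam * u i"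
    and unz: "\<forall>i\<le>n. u i \<noteq> 0"
    and usign: "\<forall>i<n. u i * u (Suc i) < 0"
    and yeq: "\<forall>i\<le>n. th * y i = Cs (Suc i) * y (Suc i) + As i * y i
                     + (if i = 0 then 0 else Bs (i-1) * y (i-1))"
    and yend: "y (Suc n) = 0"
    and y0: "y 0 \<noteq> 0"
  shows "lam \<le> th"
proof -
  define p where "p = pw Bs Cs"
  have ppos: "\<And>i. i \<le> n \<Longrightarrow> p i > 0" unfolding p_def using pw_pos[OF Bpos Cpos] by blast
  define z where "z i = y i / p i" for i
  have yz: "\<And>i. i \<le> n \<Longrightarrow> y i = p i * z i" using ppos unfolding z_def
    by (metis less_irrefl nonzero_mult_div_cancel_left times_divide_eq_right)
  have pstep: "\<And>i. i < n \<Longrightarrow> p (Suc i) * Cs (Suc i) = p i * Bs i"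
  proof -
    fix i assume "i < n"
    then have "Cs (Suc i) > 0" using Cpos by simp
    then show "p (Suc i) * Cs (Suc i) = p i * Bs i" unfolding p_def by simp
  qed
  have zeq: "\<And>i. i \<le> n \<Longrightarrow> Cs i * z (i-1) + As i * z i + Bs i * z (Suc i) = th * z i"
  proof -
    fix i assume i: "i \<le> n"
    have e: "th * y i = Cs (Suc i) * y (Suc i) + As i * y i
                     + (if i = 0 then 0 else Bs (i-1) * y (i-1))" using yeq i by blast
    have t1: "Cs (Suc i) * y (Suc i) = p i * (Bs i * z (Suc i))"
    proof (cases "i = n")
      case True then show ?thesis using yend Bn by simp
    next
      case False
      then have "i < n" using i by simp
      then show ?thesis using yz[of "Suc i"] pstep[of i] by (simp add: algebra_simps)
    qed
    have t2: "(if i = 0 then 0 else Bs (i-1) * y (i-1)) = p i * (Cs i * z (i-1))"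
    proof (cases i)
      case 0 then show ?thesis using C0 by simp
    next
      case (Suc j)
      then have "j < n" using i by simp
      then show ?thesis using yz[of j] pstep[of j] Suc by (simp add: algebra_simps)
    qed
    have "p i * (th * z i) = p i * (Cs i * z (i-1) + As i * z i + Bs i * z (Suc i))"
      using e t1 t2 yz[OF i] by (simp add: algebra_simps)
    then show "Cs i * z (i-1) + As i * z i + Bs i * z (Suc i) = th * z i"
      using ppos[OF i] by simp
  qed
  define h where "h i = p i * Bs i * (z i * z (Suc i) - (z i)^2 * u (Suc i) / u i)" for i
  define l where "l i = p i * Cs i * (z i * z (i-1) - (z i)^2 * u (i-1) / u i)" for i
  define q where "q i = h i + l (Suc i)" for i
  have tm: "\<And>i. i \<le> n \<Longrightarrow> p i * (th - lam) * (z i)^2 = l i + h i"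
  proof -
    fix i assume i: "i \<le> n"
    have a: "th * z i = Cs i * z (i-1) + As i * z i + Bs i * z (Suc i)" using zeq[OF i] by simp
    have b: "lam = (Cs i * u (i-1) + As i * u i + Bs i * u (Suc i)) / u i"
      using ueq i unz i by (simp add: field_simps)
    have "p i * (th - lam) * (z i)^2 = p i * z i * (th * z i) - p i * (z i)^2 * lam"
      by (simp add: algebra_simps power2_eq_square)
    also have "\<dots> = l i + h i" unfolding a b l_def h_def using unz i
      by (simp add: field_simps power2_eq_square)
    finally show "p i * (th - lam) * (z i)^2 = l i + h i" .
  qed
  have qnn: "\<And>i. i < n \<Longrightarrow> q i \<ge> 0"
  proof -
    fix i assume i: "i < n"
    have e: "p (Suc i) * Cs (Suc i) = p i * Bs i" using pstep[OF i] .
    have ep: "p i * Bs i > 0" using ppos[of i] i Bpos by simp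
    have un: "u i \<noteq> 0" "u (Suc i) \<noteq> 0" using unz i by auto
    have "q i = - (p i * Bs i) * (z i * u (Suc i) - z (Suc i) * u i)^2 / (u i * u (Suc i))"
      unfolding q_def h_def l_def using e un by (simp add: field_simps power2_eq_square)
    moreover have "- (p i * Bs i) * (z i * u (Suc i) - z (Suc i) * u i)^2 \<le> 0"
      using ep by (simp add: mult_nonneg_nonneg)
    moreover have "u i * u (Suc i) < 0" using usign i by blast
    ultimately show "q i \<ge> 0"
      using divide_nonpos_neg by metis
  qed
  have ind: "\<And>m. m \<le> n \<Longrightarrow> (\<Sum>i\<le>m. p i * (th - lam) * (z i)^2) = (\<Sum>i<m. q i) + h m"
  proof -
    fix m show "m \<le> n \<Longrightarrow> (\<Sum>i\<le>m. p i * (th - lam) * (z i)^2) = (\<Sum>i<m. q i) + h m"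
    proof (induction m)
      case 0 then show ?case using tm[of 0] C0 by (simp add: l_def)
    next
      case (Suc m)
      then show ?case using tm[of "Suc m"] by (simp add: q_def)
    qed
  qed
  have "(\<Sum>i\<le>n. p i * (th - lam) * (z i)^2) = (\<Sum>i<n. q i)"
    using ind[of n] Bn by (simp add: h_def)
  also have "\<dots> \<ge> 0" using qnn by (intro sum_nonneg) simp
  finally have s0: "(th - lam) * (\<Sum>i\<le>n. p i * (z i)^2) \<ge> 0"
    by (simp add: sum_distrib_left algebra_simps)
  have "(\<Sum>i\<le>n. p i * (z i)^2) \<ge> p 0 * (z 0)^2"
  proof (rule member_le_sum)
    fix i assume "i \<in> {..n} - {0}"
    then have "p i > 0" using ppos by auto
    then show "0 \<le> p i * (z i)^2" by simp
  qed auto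
  moreover have "p 0 * (z 0)^2 > 0" using y0 unfolding z_def p_def by simp
  ultimately have "(\<Sum>i\<le>n. p i * (z i)^2) > 0" by linarith
  with s0 show ?thesis by (simp add: zero_le_mult_iff)
qed

fun Pp :: "(nat \<Rightarrow> real) \<Rightarrow> (nat \<Rightarrow> real) \<Rightarrow> (nat \<Rightarrow> real) \<Rightarrow> nat \<Rightarrow> real poly" where
  "Pp As Bs Cs 0 = 1"
| "Pp As Bs Cs (Suc 0) = smult (1 / Cs 1) [:- As 0, 1:]"
| "Pp As Bs Cs (Suc (Suc i)) = smult (1 / Cs (Suc (Suc i)))
     ([:- As (Suc i), 1:] * Pp As Bs Cs (Suc i) - smult (Bs i) (Pp As Bs Cs i))"

lemma deg_lin: "degree (([:a, 1:] :: real poly) * p) = Suc (degree p)" if "p \<noteq> 0"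
proof -
  have nz: "([:a, 1:] :: real poly) \<noteq> 0" by simp
  show ?thesis using degree_mult_eq[OF nz that] by simp
qed

lemma Pp_degree:
  assumes "\<forall>i. 1 \<le> i \<and> i \<le> n \<longrightarrow> Cs i > 0"
  shows "m \<le> n \<Longrightarrow> degree (Pp As Bs Cs m) = m \<and> Pp As Bs Cs m \<noteq> 0"
proof (induction m rule: less_induct)
  case (less m)
  show ?case
  proof (cases m)
    case 0 then show ?thesis by simp
  next
    case (Suc j)
    show ?thesis
    proof (cases j)
      case 0
      then have "Cs 1 > 0" using assms less Suc by auto
      then show ?thesis using Suc 0 by simp
    next
      case (Suc i)
      have m: "m = Suc (Suc i)" using Suc \<open>m = Suc j\<close> by simp
      then have c: "Cs (Suc (Suc i)) > 0" using assms less by auto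
      have ih1: "degree (Pp As Bs Cs (Suc i)) = Suc i" "Pp As Bs Cs (Suc i) \<noteq> 0"
        using less m by auto
      have ih2: "degree (Pp As Bs Cs i) = i" using less m by auto
      let ?a = "[:- As (Suc i), 1:] * Pp As Bs Cs (Suc i)"
      have da: "degree ?a = Suc (Suc i)" by (subst deg_lin[OF ih1(2)]) (simp add: ih1(1))
      have db: "degree (- smult (Bs i) (Pp As Bs Cs i)) < degree ?a" using ih2 da by simp
      have "degree (?a - smult (Bs i) (Pp As Bs Cs i)) = Suc (Suc i)"
        using degree_add_eq_left[OF db] da by simp
      then show ?thesis using m c by auto
    qed
  qed
qed

lemma eig_poly:
  fixes As Bs Cs :: "nat \<Rightarrow> real" and n :: nat
  assumes Cpos: "\<forall>i. 1 \<le> i \<and> i \<le> n \<longrightarrow> Cs i > 0" and n1: "n \<ge> 1"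
  shows "\<exists>Q :: real poly. Q \<noteq> 0 \<and> (\<forall>th y. (\<forall>i\<le>n. th * y i = Cs (Suc i) * y (Suc i) + As i * y i
                     + (if i = 0 then 0 else Bs (i-1) * y (i-1))) \<and> y (Suc n) = 0 \<and> y 0 \<noteq> 0
             \<longrightarrow> poly Q th = 0)"
proof -
  define P where "P = Pp As Bs Cs"
  define Q where "Q = [:- As n, 1:] * P n - smult (Bs (n-1)) (P (n-1))"
  have dn: "degree (P n) = n" "P n \<noteq> 0" using Pp_degree[OF Cpos, of n] unfolding P_def by auto
  have dn1: "degree (P (n-1)) = n - 1" using Pp_degree[OF Cpos, of "n-1"] unfolding P_def by auto
  have da: "degree ([:- As n, 1:] * P n) = Suc n" by (subst deg_lin[OF dn(2)]) (simp add: dn(1))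
  have db: "degree (- smult (Bs (n-1)) (P (n-1))) < degree ([:- As n, 1:] * P n)"
  proof -
    have "n - 1 < Suc n" by arith
    then show ?thesis using da dn1 by (simp del: mult_pCons_left)
  qed
  have "degree Q = Suc n" unfolding Q_def using degree_add_eq_left[OF db] da by simp
  then have Qnz: "Q \<noteq> 0" by auto
  have main: "poly Q th = 0" if
    yeq: "\<forall>i\<le>n. th * y i = Cs (Suc i) * y (Suc i) + As i * y i
                     + (if i = 0 then 0 else Bs (i-1) * y (i-1))"
    and yend: "y (Suc n) = 0" and y0: "y 0 \<noteq> 0" for th y
  proof -
    have yp: "m \<le> n \<Longrightarrow> y m = y 0 * poly (P m) th" for m
    proof (induction m rule: less_induct)
      case (less m)
      show ?case
      proof (cases m)
        case 0 then show ?thesis by (simp add: P_def)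
      next
        case (Suc j)
        have c: "Cs (Suc j) > 0" using Cpos less Suc by auto
        have e: "th * y j = Cs (Suc j) * y (Suc j) + As j * y j
                     + (if j = 0 then 0 else Bs (j-1) * y (j-1))"
        proof -
          have "j \<le> n" using less.prems Suc by simp
          then show ?thesis using yeq by blast
        qed
        show ?thesis
        proof (cases j)
          case 0
          then have "y 1 = (th - As 0) * y 0 / Cs 1" using e c by (simp add: field_simps)
          then show ?thesis using Suc 0 c by (simp add: P_def field_simps)
        next
          case (Suc i)
          have ih: "y (Suc i) = y 0 * poly (P (Suc i)) th" "y i = y 0 * poly (P i) th"
            using less.IH[of "Suc i"] less.IH[of i] less.prems Suc \<open>m = Suc j\<close> by auto
          have "y (Suc j) = ((th - As j) * y j - Bs i * y i) / Cs (Suc j)"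
            using e c Suc by (simp add: field_simps)
          moreover have "poly (P (Suc (Suc i))) th = ((th - As (Suc i)) * poly (P (Suc i)) th
              - Bs i * poly (P i) th) / Cs (Suc (Suc i))" by (simp add: P_def divide_inverse algebra_simps)
          ultimately show ?thesis using ih \<open>m = Suc j\<close> Suc
            by (simp add: algebra_simps)
        qed
      qed
    qed
    have e: "th * y n = As n * y n + Bs (n-1) * y (n-1)"
    proof -
      have "th * y n = Cs (Suc n) * y (Suc n) + As n * y n
                     + (if n = 0 then 0 else Bs (n-1) * y (n-1))" using yeq by blast
      then show ?thesis using yend n1 by simp
    qed
    have "y 0 * poly Q th = 0"
    proof -
      have "poly Q th = (th - As n) * poly (P n) th - Bs (n-1) * poly (P (n-1)) th"
        unfolding Q_def by (simp add: algebra_simps)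
      then have "y 0 * poly Q th = (th - As n) * (y 0 * poly (P n) th) - Bs (n-1) * (y 0 * poly (P (n-1)) th)"
        by (metis (no_types, opaque_lifting) mult.assoc mult.left_commute right_diff_distrib)
      then have "y 0 * poly Q th = (th - As n) * y n - Bs (n-1) * y (n-1)"
        using yp[of n] yp[of "n-1"] by simp
      then show ?thesis using e by (simp add: algebra_simps)
    qed
    then show ?thesis using y0 by simp
  qed
  show ?thesis using Qnz main by blast
qed

locale drgs =
  fixes V :: "'a set" and E :: "'a \<Rightarrow> 'a \<Rightarrow> bool" and D :: nat
    and bi ci :: "nat \<Rightarrow> nat" and b :: int and \<alpha> \<beta> :: real and \<C> :: "'a set set"
  assumes drg: "distance_regular V E D bi ci"
    and cp: "classical_parameters D bi ci b \<alpha> \<beta>"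
    and b2: "b \<ge> 2" and D3: "D \<ge> 3"
    and geom: "geometric V E (bi 0) \<C>"
begin

abbreviation "dd \<equiv> gdist E"
abbreviation "gb \<equiv> gbr b"
definition "Nb x = {y\<in>V. E x y}"
definition "BB i = (gb D - gb i) * (\<beta> - \<alpha> * gb i)"
definition "CC i = gb i * (1 + \<alpha> * gb (i-1))"
abbreviation "k \<equiv> bi 0"

lemma sg: "simple_graph V E" using drg unfolding distance_regular_def by blast
lemma finV: "finite V" using sg unfolding simple_graph_def by blast
lemma EV: "E x y \<Longrightarrow> x \<in> V \<and> y \<in> V" using sg unfolding simple_graph_def by blast
lemma Esym: "E x y \<Longrightarrow> E y x" using sg unfolding simple_graph_def by blast
lemma Eirr: "\<not> E x x" using sg unfolding simple_graph_def by blast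
lemma conn: "x \<in> V \<Longrightarrow> y \<in> V \<Longrightarrow> \<exists>n. (E ^^ n) x y"
  using drg unfolding distance_regular_def connected_graph_def by blast
lemma diam: "x \<in> V \<Longrightarrow> y \<in> V \<Longrightarrow> dd x y \<le> D"
  using drg unfolding distance_regular_def diameter_is_def by blast
lemma diam2: "\<exists>x\<in>V. \<exists>y\<in>V. dd x y = D"
  using drg unfolding distance_regular_def diameter_is_def by blast
lemma drgB: "x \<in> V \<Longrightarrow> y \<in> V \<Longrightarrow> dd x y = i \<Longrightarrow> i < D \<Longrightarrow>
   card {z\<in>V. E y z \<and> dd x z = i + 1} = bi i"
  using drg unfolding distance_regular_def by blast
lemma drgC: "x \<in> V \<Longrightarrow> y \<in> V \<Longrightarrow> dd x y = i \<Longrightarrow> 1 \<le> i \<Longrightarrow> i \<le> D \<Longrightarrow>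
   card {z\<in>V. E y z \<and> dd x z = i - 1} = ci i"
  using drg unfolding distance_regular_def by blast

lemma relpow_sym: "(E ^^ n) x y \<Longrightarrow> (E ^^ n) y x"
proof (induction n arbitrary: y)
  case 0 then show ?case by (auto elim: relpowp_0_E)
next
  case (Suc n)
  then obtain w where "(E ^^ n) x w" "E w y" by (auto elim: relpowp_Suc_E)
  then show ?case using Suc.IH Esym relpowp_Suc_I2 by metis
qed

lemma reach: "x \<in> V \<Longrightarrow> y \<in> V \<Longrightarrow> (E ^^ dd x y) x y"
  unfolding gdist_def using conn by (metis LeastI)

lemma gd_le: "(E ^^ n) x y \<Longrightarrow> dd x y \<le> n"
  unfolding gdist_def by (rule Least_le)

lemma gd_sym: "x \<in> V \<Longrightarrow> y \<in> V \<Longrightarrow> dd x y = dd y x"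
  using reach gd_le relpow_sym by (metis le_antisym)

lemma gd0: "x \<in> V \<Longrightarrow> y \<in> V \<Longrightarrow> dd x y = 0 \<longleftrightarrow> x = y"
proof
  assume "x \<in> V" "y \<in> V" "dd x y = 0"
  then have "(E ^^ 0) x y" using reach by metis
  then show "x = y" by (auto elim: relpowp_0_E)
next
  assume "x = y"
  then show "dd x y = 0" using gd_le[of 0 x y] by (simp add: relpowp_0_I)
qed

lemma gd_self[simp]: "dd x x = 0"
  using gd_le[of 0 x x] by (simp add: relpowp_0_I)

lemma gd1: "x \<in> V \<Longrightarrow> y \<in> V \<Longrightarrow> dd x y = 1 \<longleftrightarrow> E x y"
proof
  assume a: "x \<in> V" "y \<in> V" "dd x y = 1"
  then have "(E ^^ 1) x y" using reach by metis
  then show "E x y" by (metis relpowp_1)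
next
  assume e: "E x y"
  then have "dd x y \<le> 1" using gd_le[of 1 x y] by (metis relpowp_1)
  moreover have "x \<noteq> y" using e Eirr by auto
  moreover have "x \<in> V" "y \<in> V" using e EV by auto
  ultimately show "dd x y = 1" using gd0 by (metis le_neq_implies_less less_one)
qed

lemma gdE: "E x y \<Longrightarrow> dd x y = 1" using gd1 EV by blast

lemma gd_adj: "z \<in> V \<Longrightarrow> a \<in> V \<Longrightarrow> E a c \<Longrightarrow> dd z c \<le> dd z a + 1"
proof -
  assume "z \<in> V" "a \<in> V" "E a c"
  then have "(E ^^ Suc (dd z a)) z c" using reach relpowp_Suc_I by metis
  then show ?thesis using gd_le by fastforce
qed

lemma gd_adj2: "z \<in> V \<Longrightarrow> E a c \<Longrightarrow> dd z c \<le> dd z a + 1 \<and> dd z a \<le> dd z c + 1"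
  using gd_adj EV Esym by blast

lemma gd_pred: "z \<in> V \<Longrightarrow> w \<in> V \<Longrightarrow> dd z w = Suc n \<Longrightarrow> \<exists>p\<in>V. E p w \<and> dd z p = n"
proof -
  assume a: "z \<in> V" "w \<in> V" "dd z w = Suc n"
  then have "(E ^^ Suc n) z w" using reach by metis
  then obtain p where p: "(E ^^ n) z p" "E p w" by (auto elim: relpowp_Suc_E)
  then have "dd z p \<le> n" using gd_le by blast
  moreover have "p \<in> V" using p EV by blast
  moreover have "Suc n \<le> dd z p + 1" using gd_adj[OF a(1) _ p(2)] a(3) \<open>p \<in> V\<close> by simp
  ultimately show ?thesis using p by force
qed

lemma gd_tri: "x \<in> V \<Longrightarrow> y \<in> V \<Longrightarrow> z \<in> V \<Longrightarrow> dd x z \<le> dd x y + dd y z"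
proof -
  assume "x \<in> V" "y \<in> V" "z \<in> V"
  then have "(E ^^ (dd x y + dd y z)) x z" using reach relpowp_trans by metis
  then show ?thesis using gd_le by blast
qed

lemma all_dist: "\<exists>x0\<in>V. \<forall>j\<le>D. \<exists>w\<in>V. dd x0 w = j"
proof -
  obtain x0 y0 where xy: "x0 \<in> V" "y0 \<in> V" "dd x0 y0 = D" using diam2 by blast
  have "\<exists>w\<in>V. dd x0 w = D - t" if "t \<le> D" for t
    using that
  proof (induction t)
    case 0 then show ?case using xy by auto
  next
    case (Suc t)
    then obtain w where w: "w \<in> V" "dd x0 w = D - t" by auto
    then have "dd x0 w = Suc (D - Suc t)" using Suc.prems by simp
    then show ?case using gd_pred[OF xy(1) w(1)] by blast
  qed
  then have "\<forall>j\<le>D. \<exists>w\<in>V. dd x0 w = j"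
    by (metis diff_diff_cancel diff_le_self)
  then show ?thesis using xy by blast
qed

lemma bi_pos: "i < D \<Longrightarrow> bi i \<ge> 1"
proof -
  assume i: "i < D"
  obtain x0 where x0: "x0 \<in> V" "\<forall>j\<le>D. \<exists>w\<in>V. dd x0 w = j" using all_dist by blast
  then obtain w where w: "w \<in> V" "dd x0 w = Suc i" using i by (metis Suc_leI)
  then obtain p where p: "p \<in> V" "E p w" "dd x0 p = i" using gd_pred x0 by blast
  have "w \<in> {z\<in>V. E p z \<and> dd x0 z = i + 1}" using w p by simp
  then have "card {z\<in>V. E p z \<and> dd x0 z = i + 1} \<ge> 1"
    using finV by (metis (no_types, lifting) One_nat_def Suc_leI card_gt_0_iff empty_iff finite_subset mem_Collect_eq subsetI)
  then show ?thesis using drgB[OF x0(1) p(1) p(3) i] by simp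
qed

lemma ci_pos: "1 \<le> i \<Longrightarrow> i \<le> D \<Longrightarrow> ci i \<ge> 1"
proof -
  assume i: "1 \<le> i" "i \<le> D"
  obtain x0 where x0: "x0 \<in> V" "\<forall>j\<le>D. \<exists>w\<in>V. dd x0 w = j" using all_dist by blast
  then obtain w where w: "w \<in> V" "dd x0 w = i" using i by blast
  then have "dd x0 w = Suc (i - 1)" using i by simp
  then obtain p where p: "p \<in> V" "E p w" "dd x0 p = i - 1" using gd_pred x0 w by blast
  have "p \<in> {z\<in>V. E w z \<and> dd x0 z = i - 1}" using p Esym by simp
  then have "card {z\<in>V. E w z \<and> dd x0 z = i - 1} \<ge> 1"
    using finV by (metis (no_types, lifting) One_nat_def Suc_leI card_gt_0_iff empty_iff finite_subset mem_Collect_eq subsetI)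
  then show ?thesis using drgC[OF x0(1) w(1) w(2) i] by simp
qed

end

primrec useq :: "real \<Rightarrow> real \<Rightarrow> int \<Rightarrow> nat \<Rightarrow> real" where
  "useq a be bb 0 = 1"
| "useq a be bb (Suc i) = - useq a be bb i * (1 + a * gbr bb i) / (be - a * gbr bb i)"

lemma gbr_0[simp]: "gbr bb 0 = 0" by (simp add: gbr_def)

lemma gbr_Suc: "bb \<noteq> 1 \<Longrightarrow> gbr bb (Suc j) = 1 + real_of_int bb * gbr bb j"
proof -
  assume "bb \<noteq> 1"
  then have "real_of_int bb - 1 \<noteq> 0" by simp
  then show ?thesis unfolding gbr_def by (simp add: field_simps)
qed

context drgs
begin

abbreviation "u \<equiv> useq \<alpha> \<beta> b"

lemma b_ne1: "b \<noteq> 1" using b2 by simp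
lemma rb: "real_of_int b \<ge> 2" using b2 by simp

lemma gb1[simp]: "gb 1 = 1" using gbr_Suc[OF b_ne1, of 0] by simp
lemma gb2: "gb 2 = 1 + real_of_int b"
proof -
  have "gb (Suc 1) = 1 + real_of_int b * gb 1" by (rule gbr_Suc[OF b_ne1])
  then show ?thesis using gb1 by (metis Suc_1 mult.right_neutral)
qed

lemma gb_nonneg: "gb j \<ge> 0"
proof (induction j)
  case 0 then show ?case by simp
next
  case (Suc j) then show ?case using gbr_Suc[OF b_ne1, of j] rb by simp
qed

lemma gb_step: "gb j < gb (Suc j)"
  using gbr_Suc[OF b_ne1, of j] rb gb_nonneg[of j]
  by (smt (verit) mult_le_cancel_right1)

lemma gb_mono: "i < j \<Longrightarrow> gb i < gb j"
proof (induction j)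
  case 0 then show ?case by simp
next
  case (Suc j)
  then show ?case using gb_step[of j] by (metis less_Suc_eq order.strict_trans)
qed

lemma gb_pos: "j \<ge> 1 \<Longrightarrow> gb j > 0"
  using gb_mono[of 0 j] by simp

lemma cls_b: "i < D \<Longrightarrow> real (bi i) = BB i"
  using cp unfolding classical_parameters_def BB_def by blast
lemma cls_c: "1 \<le> i \<Longrightarrow> i \<le> D \<Longrightarrow> real (ci i) = CC i"
  using cp unfolding classical_parameters_def CC_def by blast
lemma BB_D[simp]: "BB D = 0" unfolding BB_def by simp
lemma CC_0[simp]: "CC 0 = 0" unfolding CC_def by simp
lemma k_eq: "real k = gb D * \<beta>"
  using cls_b[of 0] D3 unfolding BB_def by simp

lemma gbD_pos: "gb D > 0" using gb_pos D3 by simp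

lemma bet_pos: "i < D \<Longrightarrow> \<beta> - \<alpha> * gb i > 0"
proof -
  assume i: "i < D"
  have "BB i > 0" using bi_pos[OF i] cls_b[OF i] by simp
  moreover have "gb D - gb i > 0" using gb_mono[OF i] by simp
  ultimately show ?thesis unfolding BB_def by (simp add: zero_less_mult_iff)
qed

lemma alp_pos: "i < D \<Longrightarrow> 1 + \<alpha> * gb i > 0"
proof -
  assume i: "i < D"
  have "CC (Suc i) > 0" using ci_pos[of "Suc i"] cls_c[of "Suc i"] i by simp
  moreover have "gb (Suc i) > 0" using gb_pos by simp
  ultimately show ?thesis unfolding CC_def by (simp add: zero_less_mult_iff)
qed

lemma beta_pos: "\<beta> > 0" using bet_pos[of 0] D3 by simp

lemma k_pos: "real k > 0" using k_eq gbD_pos beta_pos by simp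

lemma u_Suc: "u (Suc i) = - u i * (1 + \<alpha> * gb i) / (\<beta> - \<alpha> * gb i)" by simp

lemma u_nz: "i \<le> D \<Longrightarrow> u i \<noteq> 0"
proof (induction i)
  case 0 then show ?case by simp
next
  case (Suc i)
  then have "i < D" by simp
  then show ?case using Suc alp_pos[of i] bet_pos[of i] by simp
qed

lemma u_sign: "i < D \<Longrightarrow> u i * u (Suc i) < 0"
proof -
  assume i: "i < D"
  have r: "(1 + \<alpha> * gb i) / (\<beta> - \<alpha> * gb i) > 0" using alp_pos[OF i] bet_pos[OF i] by simp
  have "u i * u (Suc i) = - ((u i)^2 * ((1 + \<alpha> * gb i) / (\<beta> - \<alpha> * gb i)))"
    by (simp add: power2_eq_square)
  moreover have "(u i)^2 > 0" using u_nz[of i] i by simp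
  moreover have "(u i)^2 * ((1 + \<alpha> * gb i) / (\<beta> - \<alpha> * gb i)) > 0"
    using r \<open>(u i)^2 > 0\<close> by (rule mult_pos_pos[rotated])
  ultimately show ?thesis by linarith
qed

lemma u_eq: "i \<le> D \<Longrightarrow> CC i * u (i-1) + (real k - BB i - CC i) * u i + BB i * u (Suc i) = - gb D * u i"
proof -
  assume i: "i \<le> D"
  have t1: "BB i * u (Suc i) = - (gb D - gb i) * (1 + \<alpha> * gb i) * u i"
  proof (cases "i = D")
    case True then show ?thesis by simp
  next
    case False
    then have "\<beta> - \<alpha> * gb i \<noteq> 0" using bet_pos[of i] i by simp
    then show ?thesis unfolding BB_def u_Suc by (simp add: field_simps)
  qed
  have t2: "CC i * u (i-1) = - gb i * (\<beta> - \<alpha> * gb (i-1)) * u i"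
  proof (cases i)
    case 0 then show ?thesis by simp
  next
    case (Suc j)
    then have j: "j < D" using i by simp
    have n1: "\<beta> - \<alpha> * gb j \<noteq> 0" using bet_pos[OF j] by simp
    have n2: "1 + \<alpha> * gb j \<noteq> 0" using alp_pos[OF j] by simp
    have "u i = - u j * (1 + \<alpha> * gb j) / (\<beta> - \<alpha> * gb j)" using Suc by simp
    then show ?thesis unfolding CC_def using Suc n1 n2 by (simp add: field_simps)
  qed
  have kk: "real k = gb D * \<beta>" by (rule k_eq)
  show ?thesis unfolding t1 t2 kk unfolding BB_def CC_def by (simp add: algebra_simps)
qed

end

context drgs
begin

lemma finNb: "finite (Nb x)" unfolding Nb_def using finV by simp

lemma deg: "x \<in> V \<Longrightarrow> card (Nb x) = k"
proof -
  assume x: "x \<in> V"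
  have "Nb x = {z\<in>V. E x z \<and> dd x z = 0 + 1}" unfolding Nb_def using gdE by auto
  then show ?thesis using drgB[OF x x, of 0] D3 by simp
qed

lemma NS:
  assumes z: "z \<in> V" and x: "x \<in> V"
  shows "(\<Sum>w\<in>Nb x. h (dd z w)) = CC (dd z x) * h (dd z x - 1)
     + (real k - BB (dd z x) - CC (dd z x)) * h (dd z x) + BB (dd z x) * h (Suc (dd z x))"
proof -
  define j where "j = dd z x"
  have jD: "j \<le> D" using diam[OF z x] j_def by simp
  define Nm where "Nm = {w\<in>Nb x. Suc (dd z w) = j}"
  define N0 where "N0 = {w\<in>Nb x. dd z w = j}"
  define Np where "Np = {w\<in>Nb x. dd z w = Suc j}"
  have cover: "Nb x = Nm \<union> N0 \<union> Np"
  proof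
    show "Nb x \<subseteq> Nm \<union> N0 \<union> Np"
    proof
      fix w assume w: "w \<in> Nb x"
      then have "E x w" unfolding Nb_def by simp
      then have "dd z w \<le> j + 1 \<and> j \<le> dd z w + 1" using gd_adj2[OF z] j_def by blast
      then have "Suc (dd z w) = j \<or> dd z w = j \<or> dd z w = Suc j" by arith
      then show "w \<in> Nm \<union> N0 \<union> Np" using w unfolding Nm_def N0_def Np_def by blast
    qed
  qed (auto simp: Nm_def N0_def Np_def)
  have fins: "finite Nm" "finite N0" "finite Np" using finNb unfolding Nm_def N0_def Np_def by auto
  have disj: "(Nm \<union> N0) \<inter> Np = {}" "Nm \<inter> N0 = {}" unfolding Nm_def N0_def Np_def by auto
  have cNp: "real (card Np) = BB j"
  proof (cases "j < D")
    case True
    have "Np = {w\<in>V. E x w \<and> dd z w = j + 1}" unfolding Np_def Nb_def by auto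
    then show ?thesis using drgB[OF z x j_def[symmetric] True] cls_b[OF True] by simp
  next
    case False
    then have jD': "j = D" using jD by simp
    have "Np = {}"
    proof -
      have "\<forall>w\<in>Nb x. dd z w \<le> D" using diam[OF z] unfolding Nb_def by auto
      then show ?thesis unfolding Np_def using jD' by auto
    qed
    then show ?thesis using jD' by simp
  qed
  have cNm: "real (card Nm) = CC j"
  proof (cases "j = 0")
    case True
    then have "Nm = {}" unfolding Nm_def by simp
    then show ?thesis using True by simp
  next
    case False
    then have j1: "1 \<le> j" by simp
    have "Nm = {w\<in>V. E x w \<and> dd z w = j - 1}" unfolding Nm_def Nb_def using j1 by auto
    then show ?thesis using drgC[OF z x j_def[symmetric] j1 jD] cls_c[OF j1 jD] by simp
  qed
  have cN0: "real (card N0) = real k - BB j - CC j"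
  proof -
    have "card (Nb x) = card Nm + card N0 + card Np"
      using cover fins disj by (simp add: card_Un_disjoint)
    then show ?thesis using deg[OF x] cNp cNm by simp
  qed
  have "(\<Sum>w\<in>Nb x. h (dd z w)) = (\<Sum>w\<in>Nm. h (dd z w)) + (\<Sum>w\<in>N0. h (dd z w)) + (\<Sum>w\<in>Np. h (dd z w))"
    using cover fins disj by (simp add: sum.union_disjoint)
  also have "(\<Sum>w\<in>Nm. h (dd z w)) = (\<Sum>w\<in>Nm. h (j - 1))"
    by (rule sum.cong) (auto simp: Nm_def)
  also have "(\<Sum>w\<in>N0. h (dd z w)) = (\<Sum>w\<in>N0. h j)"
    by (rule sum.cong) (auto simp: N0_def)
  also have "(\<Sum>w\<in>Np. h (dd z w)) = (\<Sum>w\<in>Np. h (Suc j))"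
    by (rule sum.cong) (auto simp: Np_def)
  finally show ?thesis using cNp cNm cN0 j_def by simp
qed

lemma eig_D: "adj_eigenvalue V E (- gb D)"
proof -
  obtain z where z: "z \<in> V" using diam2 by blast
  define f where "f w = u (dd z w)" for w
  have "\<forall>x\<in>V. (\<Sum>y\<in>{y\<in>V. E x y}. f y) = - gb D * f x"
  proof
    fix x assume x: "x \<in> V"
    have "(\<Sum>y\<in>{y\<in>V. E x y}. f y) = (\<Sum>y\<in>Nb x. u (dd z y))" unfolding Nb_def f_def by simp
    also have "\<dots> = - gb D * f x" unfolding NS[OF z x] f_def using u_eq diam[OF z x] by simp
    finally show "(\<Sum>y\<in>{y\<in>V. E x y}. f y) = - gb D * f x" .
  qed
  moreover have "f z \<noteq> 0" unfolding f_def by simp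
  ultimately show ?thesis unfolding adj_eigenvalue_def using z by blast
qed

definition "AA i = real k - BB i - CC i"

lemma eig_seq:
  assumes "adj_eigenvalue V E th"
  shows "\<exists>y. (\<forall>i\<le>D. th * y i = CC (Suc i) * y (Suc i) + AA i * y i
                     + (if i = 0 then 0 else BB (i-1) * y (i-1))) \<and> y (Suc D) = 0 \<and> y 0 \<noteq> 0"
proof -
  obtain f where f: "\<exists>x\<in>V. f x \<noteq> 0" "\<forall>x\<in>V. (\<Sum>y\<in>{y\<in>V. E x y}. f y) = th * f x"
    using assms unfolding adj_eigenvalue_def by blast
  obtain x0 where x0: "x0 \<in> V" "f x0 \<noteq> 0" using f by blast
  define y where "y t = (\<Sum>w\<in>{w\<in>V. dd x0 w = t}. f w)" for t
  have y0: "y 0 = f x0"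
  proof -
    have "{w\<in>V. dd x0 w = 0} = {x0}" using gd0 x0 by auto
    then show ?thesis unfolding y_def by simp
  qed
  have yend: "y (Suc D) = 0"
  proof -
    have "{w\<in>V. dd x0 w = Suc D} = {}" using diam[OF x0(1)] by fastforce
    then show ?thesis unfolding y_def by (metis sum.empty)
  qed
  have cnt: "real (card {v\<in>Nb w. dd x0 v = i}) =
     (if dd x0 w = Suc i then CC (Suc i) else 0) + (if dd x0 w = i then AA i else 0)
     + (if i \<noteq> 0 \<and> dd x0 w = i - 1 then BB (i-1) else 0)" if w: "w \<in> V" for w i
  proof -
    define j where "j = dd x0 w"
    have "real (card {v\<in>Nb w. dd x0 v = i}) = (\<Sum>v\<in>Nb w. (\<lambda>t. if t = i then 1 else 0) (dd x0 v))"
      using finNb by (simp add: sum.If_cases Int_def)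
    also have "\<dots> = CC j * (if j - 1 = i then 1 else 0) + AA j * (if j = i then 1 else 0)
        + BB j * (if Suc j = i then 1 else 0)"
      using NS[OF x0(1) w, of "\<lambda>t. if t = i then 1 else 0"] unfolding j_def AA_def by simp
    also have "\<dots> = (if j = Suc i then CC (Suc i) else 0) + (if j = i then AA i else 0)
     + (if i \<noteq> 0 \<and> j = i - 1 then BB (i-1) else 0)"
      by (cases j) auto
    finally show ?thesis unfolding j_def .
  qed
  have yeq: "th * y i = CC (Suc i) * y (Suc i) + AA i * y i
                     + (if i = 0 then 0 else BB (i-1) * y (i-1))" for i
  proof -
    have "th * y i = (\<Sum>v\<in>{v\<in>V. dd x0 v = i}. th * f v)" unfolding y_def by (simp add: sum_distrib_left)
    also have "\<dots> = (\<Sum>v\<in>{v\<in>V. dd x0 v = i}. \<Sum>w\<in>Nb v. f w)"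
      using f(2) unfolding Nb_def by (intro sum.cong) auto
    also have "\<dots> = (\<Sum>v\<in>V. if dd x0 v = i then (\<Sum>w\<in>V. if E v w then f w else 0) else 0)"
      using finV unfolding Nb_def by (simp add: sum.inter_filter)
    also have "\<dots> = (\<Sum>v\<in>V. \<Sum>w\<in>V. if dd x0 v = i \<and> E v w then f w else 0)"
      by (intro sum.cong) auto
    also have "\<dots> = (\<Sum>w\<in>V. \<Sum>v\<in>V. if dd x0 v = i \<and> E v w then f w else 0)"
      by (rule sum.swap)
    also have "\<dots> = (\<Sum>w\<in>V. f w * real (card {v\<in>Nb w. dd x0 v = i}))"
    proof (rule sum.cong)
      fix w assume w: "w \<in> V"
      have "{v\<in>V. dd x0 v = i \<and> E v w} = {v\<in>Nb w. dd x0 v = i}" unfolding Nb_def using Esym by auto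
      then show "(\<Sum>v\<in>V. if dd x0 v = i \<and> E v w then f w else 0) = f w * real (card {v\<in>Nb w. dd x0 v = i})"
        using finV by (simp add: sum.If_cases Int_def)
    qed simp
    also have "\<dots> = (\<Sum>w\<in>V. (if dd x0 w = Suc i then CC (Suc i) * f w else 0)
       + (if dd x0 w = i then AA i * f w else 0)
       + (if i \<noteq> 0 \<and> dd x0 w = i - 1 then BB (i-1) * f w else 0))"
      using cnt by (intro sum.cong) (auto simp: algebra_simps)
    also have "\<dots> = CC (Suc i) * y (Suc i) + AA i * y i
                     + (if i = 0 then 0 else BB (i-1) * y (i-1))"
      unfolding y_def using finV
      by (simp add: sum.distrib sum.If_cases sum_distrib_left Int_def)
    finally show ?thesis .
  qed
  show ?thesis
    by (rule exI[of _ y]) (simp add: yeq yend y0 x0(2))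
qed

lemma eig_ge: "adj_eigenvalue V E th \<Longrightarrow> - gb D \<le> th"
proof -
  assume "adj_eigenvalue V E th"
  then obtain y where y: "\<forall>i\<le>D. th * y i = CC (Suc i) * y (Suc i) + AA i * y i
                     + (if i = 0 then 0 else BB (i-1) * y (i-1))" "y (Suc D) = 0" "y 0 \<noteq> 0"
    using eig_seq by blast
  show ?thesis
  proof (rule seq_bound[where Bs = BB and Cs = CC and As = AA and n = D and u = u and y = y])
    show "\<forall>i<D. 0 < BB i" using bi_pos cls_b by (metis One_nat_def Suc_le_eq of_nat_0_less_iff)
    show "\<forall>i. 1 \<le> i \<and> i \<le> D \<longrightarrow> 0 < CC i" using ci_pos cls_c by (metis One_nat_def Suc_le_eq of_nat_0_less_iff)
    show "CC 0 = 0" "BB D = 0" by simp_all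
    show "\<forall>i\<le>D. CC i * u (i - 1) + AA i * u i + BB i * u (Suc i) = - gb D * u i"
      using u_eq unfolding AA_def by blast
    show "\<forall>i\<le>D. u i \<noteq> 0" using u_nz by blast
    show "\<forall>i<D. u i * u (Suc i) < 0" using u_sign by blast
  qed (use y in auto)
qed

lemma eig_fin: "finite {th. adj_eigenvalue V E th}"
proof -
  have Cpos: "\<forall>i. 1 \<le> i \<and> i \<le> D \<longrightarrow> 0 < CC i"
    using ci_pos cls_c by (metis One_nat_def Suc_le_eq of_nat_0_less_iff)
  obtain Q :: "real poly" where Q: "Q \<noteq> 0" "\<forall>th y. (\<forall>i\<le>D. th * y i = CC (Suc i) * y (Suc i) + AA i * y i
                     + (if i = 0 then 0 else BB (i-1) * y (i-1))) \<and> y (Suc D) = 0 \<and> y 0 \<noteq> 0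
             \<longrightarrow> poly Q th = 0"
    using eig_poly[OF Cpos, of AA BB] D3 by auto
  have "{th. adj_eigenvalue V E th} \<subseteq> {th. poly Q th = 0}"
    using eig_seq Q(2) by blast
  then show ?thesis using poly_roots_finite[OF Q(1)] finite_subset by blast
qed

lemma theta_min_eq: "theta_min V E = - gb D"
  unfolding theta_min_def
  by (rule Min_eqI[OF eig_fin]) (use eig_ge eig_D in auto)

end

context drgs
begin

lemma lineC: "L \<in> \<C> \<Longrightarrow> L \<subseteq> V \<and> (\<forall>x\<in>L. \<forall>y\<in>L. x \<noteq> y \<longrightarrow> E x y)"
  using geom unfolding geometric_def delsarte_clique_def is_clique_def by blast

lemma line_adj: "L \<in> \<C> \<Longrightarrow> a \<in> L \<Longrightarrow> c \<in> L \<Longrightarrow> a \<noteq> c \<Longrightarrow> E a c"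
proof -
  assume "L \<in> \<C>" "a \<in> L" "c \<in> L" "a \<noteq> c"
  moreover have "\<forall>x\<in>L. \<forall>y\<in>L. x \<noteq> y \<longrightarrow> E x y" using lineC[OF \<open>L \<in> \<C>\<close>] by (rule conjunct2)
  ultimately show "E a c" by simp
qed

lemma line_V: "L \<in> \<C> \<Longrightarrow> a \<in> L \<Longrightarrow> a \<in> V"
  using lineC by (meson subsetD)

lemma line_card: "L \<in> \<C> \<Longrightarrow> real (card L) = 1 + \<beta>"
proof -
  assume L: "L \<in> \<C>"
  then have "real (card L) = 1 + real k / (- theta_min V E)"
    using geom unfolding geometric_def delsarte_clique_def by blast
  then show ?thesis unfolding theta_min_eq k_eq using gbD_pos by simp
qed

lemma line_uniq: "E x y \<Longrightarrow> \<exists>!K. K \<in> \<C> \<and> x \<in> K \<and> y \<in> K"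
  using geom unfolding geometric_def by blast

lemma line_uniq2: "E x y \<Longrightarrow> K \<in> \<C> \<Longrightarrow> x \<in> K \<Longrightarrow> y \<in> K \<Longrightarrow> K' \<in> \<C> \<Longrightarrow> x \<in> K' \<Longrightarrow> y \<in> K' \<Longrightarrow> K = K'"
  using line_uniq by blast

lemma finC: "finite \<C>"
proof -
  have "\<C> \<subseteq> Pow V" using line_V by auto
  then show ?thesis using finV by (meson finite_Pow_iff finite_subset)
qed

lemma finL: "L \<in> \<C> \<Longrightarrow> finite L"
proof -
  assume "L \<in> \<C>"
  then have "L \<subseteq> V" using line_V by auto
  then show ?thesis using finV finite_subset by auto
qed

definition "Lx x = {L\<in>\<C>. x \<in> L}"

lemma Nb_UN: "x \<in> V \<Longrightarrow> Nb x = (\<Union>L\<in>Lx x. L - {x})"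
proof
  assume x: "x \<in> V"
  show "Nb x \<subseteq> (\<Union>L\<in>Lx x. L - {x})"
  proof
    fix w assume "w \<in> Nb x"
    then have e: "E x w" unfolding Nb_def by simp
    then obtain K where "K \<in> \<C>" "x \<in> K" "w \<in> K" using line_uniq by blast
    moreover have "w \<noteq> x" using e Eirr by auto
    ultimately show "w \<in> (\<Union>L\<in>Lx x. L - {x})" unfolding Lx_def by blast
  qed
  show "(\<Union>L\<in>Lx x. L - {x}) \<subseteq> Nb x"
  proof
    fix w assume "w \<in> (\<Union>L\<in>Lx x. L - {x})"
    then obtain L where L: "L \<in> \<C>" "x \<in> L" "w \<in> L" "w \<noteq> x" unfolding Lx_def by blast
    then have "E x w" "w \<in> V" using line_adj[OF L(1) L(2) L(3)] line_V[OF L(1) L(3)] by auto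
    then show "w \<in> Nb x" unfolding Nb_def by simp
  qed
qed

lemma Lx_disj: "L \<in> Lx x \<Longrightarrow> L' \<in> Lx x \<Longrightarrow> L \<noteq> L' \<Longrightarrow> (L - {x}) \<inter> (L' - {x}) = {}"
proof -
  assume a: "L \<in> Lx x" "L' \<in> Lx x" "L \<noteq> L'"
  show ?thesis
  proof (rule ccontr)
    assume "(L - {x}) \<inter> (L' - {x}) \<noteq> {}"
    then obtain w where w: "w \<in> L" "w \<in> L'" "w \<noteq> x" by blast
    have "L \<in> \<C>" "x \<in> L" using a(1) unfolding Lx_def by auto
    then have "E x w" using w line_adj[of L x w] by simp
    then show False using line_uniq2[of x w L L'] a w unfolding Lx_def by blast
  qed
qed

lemma finLx: "finite (Lx x)" unfolding Lx_def using finC by simp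

lemma Lx_card: "x \<in> V \<Longrightarrow> real (card (Lx x)) = gb D"
proof -
  assume x: "x \<in> V"
  have "card (Nb x) = (\<Sum>L\<in>Lx x. card (L - {x}))"
    unfolding Nb_UN[OF x] using finLx finL Lx_disj unfolding Lx_def
    by (intro card_UN_disjoint) auto
  then have "real k = (\<Sum>L\<in>Lx x. real (card (L - {x})))" using deg[OF x] by simp
  also have "\<dots> = (\<Sum>L\<in>Lx x. \<beta>)"
  proof (rule sum.cong)
    fix L assume "L \<in> Lx x"
    then have "L \<in> \<C>" "x \<in> L" unfolding Lx_def by auto
    then have "card L \<ge> 1" using finL card_gt_0_iff by (metis One_nat_def Suc_leI empty_iff)
    then show "real (card (L - {x})) = \<beta>" using line_card[OF \<open>L \<in> \<C>\<close>] finL \<open>x \<in> L\<close>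
      by (simp add: of_nat_diff)
  qed simp
  finally have "real k = real (card (Lx x)) * \<beta>" by simp
  then show ?thesis using k_eq beta_pos by simp
qed

lemma Nb_u: "z \<in> V \<Longrightarrow> x \<in> V \<Longrightarrow> (\<Sum>w\<in>Nb x. u (dd z w)) = - gb D * u (dd z x)"
  unfolding NS using u_eq diam by simp

lemma delsarte_sum: "z \<in> V \<Longrightarrow> L \<in> \<C> \<Longrightarrow> (\<Sum>w\<in>L. u (dd z w)) = 0"
proof -
  assume z: "z \<in> V" and L0: "L \<in> \<C>"
  define g where "g w = u (dd z w)" for w
  define S where "S L = (\<Sum>w\<in>L. g w)" for L
  have loc: "(\<Sum>L\<in>Lx x. S L) = 0" if x: "x \<in> V" for x
  proof -
    have "(\<Sum>L\<in>Lx x. S L) = (\<Sum>L\<in>Lx x. g x + (\<Sum>w\<in>L - {x}. g w))"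
    proof (rule sum.cong)
      fix L assume "L \<in> Lx x"
      then have "L \<in> \<C>" "x \<in> L" unfolding Lx_def by auto
      then show "S L = g x + (\<Sum>w\<in>L - {x}. g w)" unfolding S_def using finL
        by (simp add: sum.remove)
    qed simp
    also have "\<dots> = real (card (Lx x)) * g x + (\<Sum>L\<in>Lx x. \<Sum>w\<in>L - {x}. g w)"
      by (simp add: sum.distrib)
    also have "(\<Sum>L\<in>Lx x. \<Sum>w\<in>L - {x}. g w) = (\<Sum>w\<in>Nb x. g w)"
      unfolding Nb_UN[OF x] using finLx finL Lx_disj unfolding Lx_def
      by (intro sum.UNION_disjoint[symmetric]) auto
    also have "\<dots> = - gb D * g x" unfolding g_def using Nb_u[OF z x] .
    finally show ?thesis using Lx_card[OF x] by simp
  qed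
  have "(\<Sum>L\<in>\<C>. (S L)^2) = (\<Sum>L\<in>\<C>. \<Sum>x\<in>L. g x * S L)"
    unfolding S_def by (simp add: power2_eq_square sum_distrib_right)
  also have "\<dots> = (\<Sum>L\<in>\<C>. \<Sum>x\<in>V. if x \<in> L then g x * S L else 0)"
  proof (rule sum.cong)
    fix L assume "L \<in> \<C>"
    then have "L \<subseteq> V" using line_V by auto
    then have "{x\<in>V. x \<in> L} = L" by blast
    then show "(\<Sum>x\<in>L. g x * S L) = (\<Sum>x\<in>V. if x \<in> L then g x * S L else 0)"
      using finV sum.inter_filter[of V "\<lambda>x. g x * S L" "\<lambda>x. x \<in> L"] by simp
  qed simp
  also have "\<dots> = (\<Sum>x\<in>V. \<Sum>L\<in>\<C>. if x \<in> L then g x * S L else 0)" by (rule sum.swap)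
  also have "\<dots> = (\<Sum>x\<in>V. g x * (\<Sum>L\<in>Lx x. S L))"
  proof (rule sum.cong)
    fix x assume "x \<in> V"
    show "(\<Sum>L\<in>\<C>. if x \<in> L then g x * S L else 0) = g x * (\<Sum>L\<in>Lx x. S L)"
      unfolding Lx_def using finC sum.inter_filter[of \<C> "\<lambda>L. g x * S L" "\<lambda>L. x \<in> L"]
      by (simp add: sum_distrib_left)
  qed simp
  also have "\<dots> = 0" using loc by simp
  finally have "(\<Sum>L\<in>\<C>. (S L)^2) = 0" .
  then have "\<forall>L\<in>\<C>. (S L)^2 = 0" using finC by (simp add: sum_nonneg_eq_0_iff)
  then show ?thesis using L0 unfolding S_def g_def by simp
qed

lemma line_count:
  assumes z: "z \<in> V" and L: "L \<in> \<C>" and i: "i < D"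
    and ge: "\<forall>w\<in>L. dd z w \<ge> i" and w0: "w0 \<in> L" "dd z w0 = i"
  shows "real (card {w\<in>L. dd z w = i}) = 1 + \<alpha> * gb i"
    and "\<forall>w\<in>L. dd z w = i \<or> dd z w = Suc i"
proof -
  show two: "\<forall>w\<in>L. dd z w = i \<or> dd z w = Suc i"
  proof
    fix w assume w: "w \<in> L"
    have "dd z w \<le> i + 1"
    proof (cases "w = w0")
      case True then show ?thesis using w0 by simp
    next
      case False
      then have "E w0 w" using line_adj[OF L w0(1) w] by simp
      then show ?thesis using gd_adj[OF z _ \<open>E w0 w\<close>] w0 EV by fastforce
    qed
    then show "dd z w = i \<or> dd z w = Suc i" using ge w by fastforce
  qed
  define Li where "Li = {w\<in>L. dd z w = i}"
  define Lj where "Lj = {w\<in>L. dd z w = Suc i}"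
  have LU: "L = Li \<union> Lj" unfolding Li_def Lj_def using two by blast
  have fins: "finite Li" "finite Lj" using finL[OF L] unfolding Li_def Lj_def by auto
  have dis: "Li \<inter> Lj = {}" unfolding Li_def Lj_def by auto
  have cL: "real (card Li) + real (card Lj) = 1 + \<beta>"
    using line_card[OF L] LU fins dis by (simp add: card_Un_disjoint)
  have "(\<Sum>w\<in>L. u (dd z w)) = (\<Sum>w\<in>Li. u (dd z w)) + (\<Sum>w\<in>Lj. u (dd z w))"
    using LU fins dis by (simp add: sum.union_disjoint)
  also have "\<dots> = real (card Li) * u i + real (card Lj) * u (Suc i)"
    unfolding Li_def Lj_def by simp
  finally have s: "real (card Li) * u i + real (card Lj) * u (Suc i) = 0"
    using delsarte_sum[OF z L] by simp
  have bp: "\<beta> - \<alpha> * gb i > 0" using bet_pos[OF i] .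
  have un: "u i \<noteq> 0" using u_nz i by simp
  have us: "u (Suc i) * (\<beta> - \<alpha> * gb i) = - u i * (1 + \<alpha> * gb i)"
    using bp unfolding u_Suc by (simp add: field_simps)
  have "(real (card Li) * u i + real (card Lj) * u (Suc i)) * (\<beta> - \<alpha> * gb i)
     = (real (card Li) * (\<beta> - \<alpha> * gb i) - real (card Lj) * (1 + \<alpha> * gb i)) * u i
       + real (card Lj) * (u (Suc i) * (\<beta> - \<alpha> * gb i) + u i * (1 + \<alpha> * gb i))"
    by (simp add: algebra_simps)
  then have "(real (card Li) * (\<beta> - \<alpha> * gb i) - real (card Lj) * (1 + \<alpha> * gb i)) * u i = 0"
    using s us by simp
  then have "real (card Li) * (\<beta> - \<alpha> * gb i) - real (card Lj) * (1 + \<alpha> * gb i) = 0"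
    using un by simp
  then have "real (card Li) * (1 + \<beta>) = (1 + \<beta>) * (1 + \<alpha> * gb i)"
  proof -
    assume h: "real (card Li) * (\<beta> - \<alpha> * gb i) - real (card Lj) * (1 + \<alpha> * gb i) = 0"
    have e1: "real (card Li) * (1 + \<beta>) = real (card Li) * (\<beta> - \<alpha> * gb i) + real (card Li) * (1 + \<alpha> * gb i)"
      by (simp add: algebra_simps)
    have e2: "(1 + \<beta>) * (1 + \<alpha> * gb i) = (real (card Li) + real (card Lj)) * (1 + \<alpha> * gb i)"
      using cL by simp
    have e3: "(real (card Li) + real (card Lj)) * (1 + \<alpha> * gb i) = real (card Li) * (1 + \<alpha> * gb i) + real (card Lj) * (1 + \<alpha> * gb i)"
      by (simp add: algebra_simps)
    show ?thesis using h e1 e2 e3 by linarith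
  qed
  then show "real (card {w\<in>L. dd z w = i}) = 1 + \<alpha> * gb i"
    using beta_pos unfolding Li_def by simp
qed

end

lemma dcount: "finite A \<Longrightarrow> finite B \<Longrightarrow>
  (\<Sum>a\<in>A. card {b\<in>B. R a b}) = (\<Sum>b\<in>B. card {a\<in>A. R a b})"
proof -
  assume fA: "finite A" and fB: "finite B"
  have "(\<Sum>a\<in>A. card {b\<in>B. R a b}) = (\<Sum>a\<in>A. \<Sum>b\<in>B. if R a b then 1 else 0)"
    using fB by (simp add: sum.If_cases Int_def)
  also have "\<dots> = (\<Sum>b\<in>B. \<Sum>a\<in>A. if R a b then 1 else 0)" by (rule sum.swap)
  also have "\<dots> = (\<Sum>b\<in>B. card {a\<in>A. R a b})"
    using fA by (simp add: sum.If_cases Int_def)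
  finally show ?thesis .
qed

context drgs
begin

lemma gbS0[simp]: "gb (Suc 0) = 1" by (metis One_nat_def gb1)

lemma one_alpha: "1 + \<alpha> > 0" using alp_pos[of 1] D3 by simp

lemma cnt1:
  assumes z: "z \<in> V" and L: "L \<in> \<C>" and zL: "z \<notin> L" and w0: "w0 \<in> L" "E z w0"
  shows "real (card {w\<in>L. E z w}) = 1 + \<alpha>"
proof -
  have ge: "\<forall>w\<in>L. dd z w \<ge> 1"
  proof
    fix w assume w: "w \<in> L"
    then have "w \<in> V" "w \<noteq> z" using line_V[OF L] zL by auto
    then show "dd z w \<ge> 1" using gd0[OF z] by fastforce
  qed
  have "dd z w0 = 1" using gdE[OF w0(2)] .
  then have c: "real (card {w\<in>L. dd z w = 1}) = 1 + \<alpha> * gb 1"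
    using line_count(1)[OF z L _ ge w0(1)] D3 by simp
  have "{w\<in>L. dd z w = 1} = {w\<in>L. E z w}" using gd1[OF z] line_V[OF L] by auto
  then show ?thesis using c by simp
qed

lemma cnt1':
  assumes z: "z \<in> V" and L: "L \<in> \<C>" and zL: "z \<notin> L"
  shows "real (card {w\<in>L. E z w}) \<le> 1 + \<alpha>"
proof (cases "\<exists>w0\<in>L. E z w0")
  case True then show ?thesis using cnt1[OF z L zL] by auto
next
  case False
  then have e: "{w\<in>L. E z w} = {}" by auto
  show ?thesis unfolding e using one_alpha by simp
qed

lemma cnt2:
  assumes z: "z \<in> V" and L: "L \<in> \<C>" and ge: "\<forall>w\<in>L. dd z w \<ge> 2" and w0: "w0 \<in> L" "dd z w0 = 2"
  shows "real (card {w\<in>L. dd z w = 2}) = 1 + \<alpha> * (1 + real_of_int b)"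
    and "\<exists>w\<in>L. dd z w = 3"
proof -
  have i: "2 < D" using D3 by simp
  show c: "real (card {w\<in>L. dd z w = 2}) = 1 + \<alpha> * (1 + real_of_int b)"
    using line_count(1)[OF z L i ge w0] gb2 by simp
  have two: "\<forall>w\<in>L. dd z w = 2 \<or> dd z w = 3"
    using line_count(2)[OF z L i ge w0] by (simp add: numeral_3_eq_3)
  have "\<beta> - \<alpha> * gb 2 > 0" using bet_pos[OF i] .
  then have "real (card {w\<in>L. dd z w = 2}) < real (card L)"
    using c line_card[OF L] gb2 by simp
  then have "{w\<in>L. dd z w = 2} \<noteq> L" by auto
  then show "\<exists>w\<in>L. dd z w = 3" using two by auto
qed

lemma LS_char:
  assumes x: "x \<in> V" and y: "y \<in> V" and d: "dd x y = 2"
  shows "M \<in> line_set E \<C> x y \<longleftrightarrow> M \<in> \<C> \<and> x \<in> M \<and> (\<exists>w\<in>M. E y w)"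
proof
  assume "M \<in> \<C> \<and> x \<in> M \<and> (\<exists>w\<in>M. E y w)"
  then obtain w where M: "M \<in> \<C>" "x \<in> M" "w \<in> M" "E y w" by blast
  have "\<forall>v\<in>M. dd y v \<le> 2"
  proof
    fix v assume v: "v \<in> M"
    show "dd y v \<le> 2"
    proof (cases "v = w")
      case True then show ?thesis using gdE[OF M(4)] by simp
    next
      case False
      then have "E w v" using line_adj[OF M(1) M(3) v] by simp
      then show ?thesis using gd_adj[OF y _ \<open>E w v\<close>] gdE[OF M(4)] line_V[OF M(1) M(3)] by simp
    qed
  qed
  then show "M \<in> line_set E \<C> x y" unfolding line_set_def using M by simp
next
  assume "M \<in> line_set E \<C> x y"
  then have M: "M \<in> \<C>" "x \<in> M" "\<forall>v\<in>M. dd y v \<le> 2" unfolding line_set_def by auto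
  show "M \<in> \<C> \<and> x \<in> M \<and> (\<exists>w\<in>M. E y w)"
  proof (rule ccontr)
    assume "\<not> ?thesis"
    then have nadj: "\<forall>w\<in>M. \<not> E y w" using M by blast
    have dyx: "dd y x = 2" using gd_sym[OF x y] d by simp
    have ge: "\<forall>w\<in>M. dd y w \<ge> 2"
    proof
      fix w assume w: "w \<in> M"
      have wV: "w \<in> V" using line_V[OF M(1) w] .
      have "w \<noteq> y"
      proof
        assume "w = y"
        then have "y \<noteq> x" using d by auto
        then have "E x y" using line_adj[OF M(1) M(2)] w \<open>w = y\<close> by simp
        then show False using gdE d by simp
      qed
      then have "dd y w \<noteq> 0" using gd0[OF y wV] by simp
      moreover have "dd y w \<noteq> 1" using gd1[OF y wV] nadj w by simp
      ultimately show "dd y w \<ge> 2" by simp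
    qed
    obtain w where "w \<in> M" "dd y w = 3" using cnt2(2)[OF y M(1) ge M(2) dyx] by blast
    then show False using M(3) by fastforce
  qed
qed

lemma LS_sub: "line_set E \<C> x y \<subseteq> \<C>" unfolding line_set_def by auto
lemma LS_fin: "finite (line_set E \<C> x y)" using LS_sub finC finite_subset by blast

lemma LS_card:
  assumes x: "x \<in> V" and y: "y \<in> V" and d: "dd x y = 2"
  shows "real (card (line_set E \<C> x y)) * (1 + \<alpha>) = real (ci 2)"
proof -
  define LS where "LS = line_set E \<C> x y"
  define W where "W = {z\<in>V. E y z \<and> dd x z = 2 - 1}"
  have cW: "card W = ci 2" unfolding W_def using drgC[OF x y d] D3 by simp
  have nxy: "\<not> E y x" using gdE[of y x] gd_sym[OF x y] d by auto
  have WU: "W = (\<Union>M\<in>LS. {w\<in>M. E y w})"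
  proof
    show "W \<subseteq> (\<Union>M\<in>LS. {w\<in>M. E y w})"
    proof
      fix w assume "w \<in> W"
      then have w: "w \<in> V" "E y w" "dd x w = 1" unfolding W_def by auto
      then have "E x w" using gd1[OF x] by simp
      then obtain K where K: "K \<in> \<C>" "x \<in> K" "w \<in> K" using line_uniq by blast
      then have "K \<in> LS" unfolding LS_def using LS_char[OF x y d] w by blast
      then show "w \<in> (\<Union>M\<in>LS. {w\<in>M. E y w})" using K w by blast
    qed
    show "(\<Union>M\<in>LS. {w\<in>M. E y w}) \<subseteq> W"
    proof
      fix w assume "w \<in> (\<Union>M\<in>LS. {w\<in>M. E y w})"
      then obtain M where M: "M \<in> LS" "w \<in> M" "E y w" by blast
      then have M': "M \<in> \<C>" "x \<in> M" unfolding LS_def using LS_char[OF x y d] by auto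
      have "w \<noteq> x" using M nxy by auto
      then have "E x w" using line_adj[OF M'(1) M'(2) M(2)] by simp
      then show "w \<in> W" unfolding W_def using gdE EV M(3) by auto
    qed
  qed
  have "card W = (\<Sum>M\<in>LS. card {w\<in>M. E y w})"
    unfolding WU
  proof (rule card_UN_disjoint)
    show "finite LS" unfolding LS_def by (rule LS_fin)
    show "\<forall>M\<in>LS. finite {w\<in>M. E y w}"
    proof
      fix M assume "M \<in> LS"
      then have "M \<in> \<C>" using LS_sub unfolding LS_def by blast
      then show "finite {w\<in>M. E y w}" using finL by simp
    qed
    show "\<forall>M\<in>LS. \<forall>M'\<in>LS. M \<noteq> M' \<longrightarrow> {w\<in>M. E y w} \<inter> {w\<in>M'. E y w} = {}"
    proof (intro ballI impI)
      fix M M' assume MM: "M \<in> LS" "M' \<in> LS" "M \<noteq> M'"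
      then have a: "M \<in> \<C>" "x \<in> M" "M' \<in> \<C>" "x \<in> M'" unfolding LS_def using LS_char[OF x y d] by auto
      show "{w\<in>M. E y w} \<inter> {w\<in>M'. E y w} = {}"
      proof (rule ccontr)
        assume "{w\<in>M. E y w} \<inter> {w\<in>M'. E y w} \<noteq> {}"
        then obtain w where w: "w \<in> M" "w \<in> M'" "E y w" by blast
        have "w \<noteq> x" using w nxy by auto
        then have "E x w" using line_adj[OF a(1) a(2) w(1)] by simp
        then show False using line_uniq2[OF _ a(1) a(2) w(1) a(3) a(4) w(2)] MM(3) by simp
      qed
    qed
  qed
  then have "real (card W) = (\<Sum>M\<in>LS. real (card {w\<in>M. E y w}))" by simp
  also have "\<dots> = (\<Sum>M\<in>LS. 1 + \<alpha>)"
  proof (rule sum.cong)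
    fix M assume "M \<in> LS"
    then have a: "M \<in> \<C>" "x \<in> M" "\<exists>w\<in>M. E y w" unfolding LS_def using LS_char[OF x y d] by auto
    have "y \<notin> M"
    proof
      assume "y \<in> M"
      moreover have "y \<noteq> x" using d by auto
      ultimately have "E x y" using line_adj[OF a(1) a(2)] by simp
      then show False using gdE d by simp
    qed
    then show "real (card {w\<in>M. E y w}) = 1 + \<alpha>" using cnt1[OF y a(1)] a(3) by blast
  qed simp
  finally show ?thesis using cW unfolding LS_def by simp
qed

end

context drgs
begin

lemma lemK:
  assumes x: "x \<in> V" and L: "L \<in> \<C>" and xL: "x \<notin> L"
    and N_def: "N = {p\<in>L. E x p}" and cN: "real (card N) = 1 + \<alpha>"
    and M: "M \<in> \<C>" and xM: "x \<in> M" and MN: "M \<inter> N = {}"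
    and y': "y' \<in> L" "y' \<notin> N" and nadj: "\<forall>w\<in>M. \<not> E y' w"
  shows "real (card {y\<in>L - N. \<exists>w\<in>M. E y w}) \<le> \<alpha> * real_of_int b"
proof -
  define G' where "G' = {y\<in>L - N. \<exists>w\<in>M. E y w}"
  have y'V: "y' \<in> V" using line_V[OF L y'(1)] .
  have Nne: "N \<noteq> {}" using cN one_alpha by auto
  then obtain p0 where p0: "p0 \<in> N" by blast
  have p0': "p0 \<in> L" "E x p0" using p0 N_def by auto
  have finM: "finite M" using finL[OF M] .
  have finLN: "finite (L - N)" using finL[OF L] by simp
  have finN: "finite N" using finL[OF L] N_def by simp
  have finG: "finite G'" unfolding G'_def using finL[OF L] by simp
  have yx2: "dd y' x = 2"
  proof -
    have "y' \<noteq> p0" using y' p0 by auto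
    then have "E p0 y'" using line_adj[OF L p0'(1) y'(1)] by simp
    then have "dd y' p0 = 1" using gdE Esym by blast
    then have "dd y' x \<le> 2" using gd_adj[OF y'V _ Esym[OF p0'(2)]] EV[OF p0'(2)] by simp
    moreover have "dd y' x \<noteq> 0" using gd0[OF y'V x] y'(1) xL by auto
    moreover have "dd y' x \<noteq> 1" using gd1[OF y'V x] nadj xM by auto
    ultimately show ?thesis by simp
  qed
  have ge2: "\<forall>w\<in>M. dd y' w \<ge> 2"
  proof
    fix w assume w: "w \<in> M"
    have wV: "w \<in> V" using line_V[OF M w] .
    have "w \<noteq> y'"
    proof
      assume "w = y'"
      moreover have "y' \<noteq> x" using y'(1) xL by auto
      ultimately have "E x y'" using line_adj[OF M xM w] by simp
      then show False using y' N_def by auto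
    qed
    then have "dd y' w \<noteq> 0" using gd0[OF y'V wV] by simp
    moreover have "dd y' w \<noteq> 1" using gd1[OF y'V wV] nadj w by simp
    ultimately show "dd y' w \<ge> 2" by simp
  qed
  define D2 where "D2 = {w\<in>M. dd y' w = 2}"
  have cD2: "real (card D2) = 1 + \<alpha> * (1 + real_of_int b)"
    unfolding D2_def using cnt2(1)[OF y'V M ge2 xM yx2] .
  have xD2: "x \<in> D2" unfolding D2_def using xM yx2 by simp
  have finD2: "finite D2" unfolding D2_def using finM by simp
  have cQ: "real (card {w\<in>M. E y w}) = 1 + \<alpha>" if y: "y \<in> G'" for y
  proof -
    have yL: "y \<in> L" "y \<notin> N" using y unfolding G'_def by auto
    have yV: "y \<in> V" using line_V[OF L yL(1)] .
    have "y \<notin> M"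
    proof
      assume "y \<in> M"
      moreover have "y \<noteq> x" using yL xL by auto
      ultimately have "E x y" using line_adj[OF M xM] by simp
      then show False using yL N_def by auto
    qed
    moreover obtain w where "w \<in> M" "E y w" using y unfolding G'_def by blast
    ultimately show ?thesis using cnt1[OF yV M] by blast
  qed
  have wL: "w \<notin> L" if w: "w \<in> M" for w
  proof
    assume wL: "w \<in> L"
    show False
    proof (cases "w = x")
      case True then show False using xL wL by simp
    next
      case False
      then have "E x w" using line_adj[OF M xM w] by simp
      then have "w \<in> N" using N_def wL by simp
      then show False using MN w by blast
    qed
  qed
  have loc: "real (card {y\<in>G'. E y w}) \<le> 1 + \<alpha> - real (card {p\<in>N. E w p})" if w: "w \<in> M" for w
  proof -
    have wV: "w \<in> V" using line_V[OF M w] .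
    have sub: "{y\<in>G'. E y w} \<subseteq> {y\<in>L. E w y} - {p\<in>N. E w p}"
      unfolding G'_def using Esym by auto
    have sub2: "{p\<in>N. E w p} \<subseteq> {y\<in>L. E w y}" using N_def by auto
    have fin1: "finite {y\<in>L. E w y}" using finL[OF L] by simp
    have "card {y\<in>G'. E y w} \<le> card ({y\<in>L. E w y} - {p\<in>N. E w p})"
      using sub fin1 by (simp add: card_mono)
    also have "\<dots> = card {y\<in>L. E w y} - card {p\<in>N. E w p}"
      using sub2 fin1 by (meson card_Diff_subset finite_subset)
    finally have "real (card {y\<in>G'. E y w}) \<le> real (card {y\<in>L. E w y}) - real (card {p\<in>N. E w p})"
      using card_mono[OF fin1 sub2] by linarith
    moreover have "real (card {y\<in>L. E w y}) \<le> 1 + \<alpha>" using cnt1'[OF wV L wL[OF w]] .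
    ultimately show ?thesis by linarith
  qed
  have zero: "card {y\<in>G'. E y w} = 0" if w: "w \<in> M" "w \<notin> D2 - {x}" for w
  proof (rule ccontr)
    assume "card {y\<in>G'. E y w} \<noteq> 0"
    then have "{y\<in>G'. E y w} \<noteq> {}" by (metis card.empty)
    then obtain y where y: "y \<in> G'" "E y w" by blast
    have yL: "y \<in> L" "y \<notin> N" using y unfolding G'_def by auto
    have "w \<noteq> x"
    proof
      assume "w = x"
      then have "E x y" using y Esym by simp
      then show False using yL N_def by auto
    qed
    have "y \<noteq> y'" using y nadj unfolding G'_def by blast
    then have "E y' y" using line_adj[OF L y'(1) yL(1)] by simp
    then have "dd y' y = 1" using gdE by simp
    then have "dd y' w \<le> 2" using gd_adj[OF y'V _ y(2)] line_V[OF L yL(1)] by simp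
    then have "w \<in> D2" unfolding D2_def using ge2 w(1) by fastforce
    then show False using w \<open>w \<noteq> x\<close> by blast
  qed
  have "real (card G') * (1 + \<alpha>) = (\<Sum>y\<in>G'. real (card {w\<in>M. E y w}))"
    using cQ by simp
  also have "\<dots> = real (\<Sum>y\<in>G'. card {w\<in>M. E y w})" by simp
  also have "(\<Sum>y\<in>G'. card {w\<in>M. E y w}) = (\<Sum>w\<in>M. card {y\<in>G'. E y w})"
    using dcount[OF finG finM, of "\<lambda>y w. E y w"] .
  also have "\<dots> = (\<Sum>w\<in>D2 - {x}. card {y\<in>G'. E y w})"
  proof -
    have s: "D2 - {x} \<subseteq> M" unfolding D2_def by auto
    have "\<forall>w\<in>M - (D2 - {x}). card {y\<in>G'. E y w} = 0"
    proof
      fix w assume "w \<in> M - (D2 - {x})"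
      then have "w \<in> M" "w \<notin> D2 - {x}" by auto
      then show "card {y\<in>G'. E y w} = 0" by (rule zero)
    qed
    then show ?thesis by (rule sum.mono_neutral_right[OF finM s])
  qed
  finally have e1: "real (card G') * (1 + \<alpha>) = (\<Sum>w\<in>D2 - {x}. real (card {y\<in>G'. E y w}))"
    by simp
  also have "\<dots> \<le> (\<Sum>w\<in>D2 - {x}. 1 + \<alpha> - real (card {p\<in>N. E w p}))"
    using loc unfolding D2_def by (intro sum_mono) auto
  also have "\<dots> = real (card (D2 - {x})) * (1 + \<alpha>) - (\<Sum>w\<in>D2 - {x}. real (card {p\<in>N. E w p}))"
    by (simp add: sum_subtractf)
  finally have e2: "real (card G') * (1 + \<alpha>) \<le> real (card (D2 - {x})) * (1 + \<alpha>) - (\<Sum>w\<in>D2 - {x}. real (card {p\<in>N. E w p}))" .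
  have "(\<Sum>w\<in>D2 - {x}. card {p\<in>N. E w p}) = (\<Sum>w\<in>M - {x}. card {p\<in>N. E w p})"
  proof -
    have s: "D2 - {x} \<subseteq> M - {x}" unfolding D2_def by auto
    have z: "card {p\<in>N. E w p} = 0" if w: "w \<in> M - {x} - (D2 - {x})" for w
    proof (rule ccontr)
      assume "card {p\<in>N. E w p} \<noteq> 0"
      then have "{p\<in>N. E w p} \<noteq> {}" by (metis card.empty)
      then obtain p where p: "p \<in> N" "E w p" by blast
      have "p \<in> L" using p N_def by simp
      moreover have "p \<noteq> y'" using p y' by auto
      ultimately have "E y' p" using line_adj[OF L y'(1)] by simp
      then have "dd y' w \<le> 2" using gd_adj[OF y'V _ Esym[OF p(2)]] gdE EV by fastforce
      then have "w \<in> D2" unfolding D2_def using ge2 w by fastforce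
      then show False using w by blast
    qed
    have "\<forall>w\<in>M - {x} - (D2 - {x}). card {p\<in>N. E w p} = 0"
    proof
      fix w assume "w \<in> M - {x} - (D2 - {x})"
      then show "card {p\<in>N. E w p} = 0" by (rule z)
    qed
    moreover have "finite (M - {x})" using finM by simp
    ultimately show ?thesis by (intro sum.mono_neutral_left[OF _ s])
  qed
  also have "\<dots> = (\<Sum>p\<in>N. card {w\<in>M - {x}. E w p})"
    using dcount[of "M - {x}" N "\<lambda>w p. E w p"] finM finN by simp
  finally have h1: "(\<Sum>w\<in>D2 - {x}. card {p\<in>N. E w p}) = (\<Sum>p\<in>N. card {w\<in>M - {x}. E w p})" .
  have h2: "real (card {w\<in>M - {x}. E w p}) = \<alpha>" if p: "p \<in> N" for p
  proof -
    have pL: "p \<in> L" "E x p" using p N_def by auto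
    have pV: "p \<in> V" using line_V[OF L pL(1)] .
    have pM: "p \<notin> M" using p MN by blast
    have c: "real (card {w\<in>M. E p w}) = 1 + \<alpha>"
      using cnt1[OF pV M pM xM Esym[OF pL(2)]] .
    have "{w\<in>M - {x}. E w p} = {w\<in>M. E p w} - {x}" using Esym by auto
    moreover have "x \<in> {w\<in>M. E p w}" using xM Esym[OF pL(2)] by simp
    ultimately have "card {w\<in>M - {x}. E w p} = card {w\<in>M. E p w} - 1"
      using finM by simp
    moreover have "card {w\<in>M. E p w} \<ge> 1"
    proof -
      have "finite {w\<in>M. E p w}" using finM by simp
      then have "card {w\<in>M. E p w} > 0" using \<open>x \<in> {w\<in>M. E p w}\<close> card_gt_0_iff by blast
      then show ?thesis by simp
    qed
    ultimately show ?thesis using c by (simp add: of_nat_diff)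
  qed
  have "(\<Sum>w\<in>D2 - {x}. real (card {p\<in>N. E w p})) = real (\<Sum>w\<in>D2 - {x}. card {p\<in>N. E w p})"
    by simp
  also have "\<dots> = (\<Sum>p\<in>N. real (card {w\<in>M - {x}. E w p}))" using h1 by simp
  also have "\<dots> = (\<Sum>p\<in>N. \<alpha>)" using h2 by simp
  also have "\<dots> = (1 + \<alpha>) * \<alpha>" using cN by simp
  finally have h3: "(\<Sum>w\<in>D2 - {x}. real (card {p\<in>N. E w p})) = (1 + \<alpha>) * \<alpha>" .
  have cD2x: "real (card (D2 - {x})) = \<alpha> * (1 + real_of_int b)"
  proof -
    have "card D2 > 0" using xD2 finD2 card_gt_0_iff by blast
    then have "real (card (D2 - {x})) = real (card D2) - 1" using xD2 finD2 by (simp add: of_nat_diff)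
    then show ?thesis using cD2 by simp
  qed
  have "real (card G') * (1 + \<alpha>) \<le> (\<alpha> * real_of_int b) * (1 + \<alpha>)"
    using e2 h3 cD2x by (simp add: algebra_simps)
  then have "real (card G') \<le> \<alpha> * real_of_int b" using one_alpha by simp
  then show ?thesis unfolding G'_def .
qed

end

context drgs
begin

lemma main_loc:
  assumes ineq: "\<beta> > (gb D - \<alpha> - 1) * \<alpha> * real_of_int b + \<alpha>"
    and x: "x \<in> V" and L: "L \<in> \<C>" and y1: "y1 \<in> L" and y2: "y2 \<in> L"
    and dL: "dist_set E x L = 1" and d1: "dd x y1 = 2" and d2: "dd x y2 = 2"
  shows "line_set E \<C> x y1 = line_set E \<C> x y2"
proof -
  have finL': "finite L" using finL[OF L] .
  have Lne: "L \<noteq> {}" using y1 by auto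
  have ge1: "\<forall>w\<in>L. dd x w \<ge> 1"
  proof
    fix w assume "w \<in> L"
    then have "Min (dd x ` L) \<le> dd x w" using finL' by simp
    then show "dd x w \<ge> 1" using dL unfolding dist_set_def by simp
  qed
  obtain w0 where w0: "w0 \<in> L" "dd x w0 = 1"
  proof -
    have "Min (dd x ` L) \<in> dd x ` L" using finL' Lne by simp
    then show ?thesis using that dL unfolding dist_set_def by auto
  qed
  have xL: "x \<notin> L" using ge1 by fastforce
  have ew0: "E x w0" using gd1[OF x line_V[OF L w0(1)]] w0 by simp
  define N where "N = {p\<in>L. E x p}"
  have cN: "real (card N) = 1 + \<alpha>" unfolding N_def using cnt1[OF x L xL w0(1) ew0] .
  have finN: "finite N" unfolding N_def using finL' by simp
  have w0N: "w0 \<in> N" unfolding N_def using w0 ew0 by simp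
  have alpha_nn: "\<alpha> \<ge> 0"
  proof -
    have "card N > 0" using w0N finN card_gt_0_iff by blast
    then show ?thesis using cN by linarith
  qed
  have dLN: "dd x y = 2" if y: "y \<in> L - N" for y
  proof -
    have yV: "y \<in> V" using line_V[OF L] y by blast
    have "y \<noteq> w0" using y w0N by auto
    then have "E w0 y" using line_adj[OF L w0(1)] y by simp
    then have "dd x y \<le> 2" using gd_adj[OF x _ \<open>E w0 y\<close>] w0 line_V[OF L w0(1)] by simp
    moreover have "dd x y \<noteq> 0" using ge1 y by fastforce
    moreover have "dd x y \<noteq> 1" using gd1[OF x yV] y unfolding N_def by auto
    ultimately show ?thesis by simp
  qed
  have y1N: "y1 \<in> L - N" using y1 d1 gdE unfolding N_def by fastforce
  have y2N: "y2 \<in> L - N" using y2 d2 gdE unfolding N_def by fastforce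
  define Ol where "Ol = {M\<in>\<C>. x \<in> M \<and> M \<inter> N = {}}"
  define P where "P = {M\<in>Ol. \<exists>y'\<in>L - N. \<forall>w\<in>M. \<not> E y' w}"
  define GG where "GG M = {y\<in>L - N. \<exists>w\<in>M. E y w}" for M
  define B where "B = (\<Union>M\<in>P. GG M)"
  have finOl: "finite Ol" unfolding Ol_def using finC by simp
  have finP: "finite P" unfolding P_def using finOl by simp
  have PO: "P \<subseteq> Ol" unfolding P_def by auto
  have GGb: "real (card (GG M)) \<le> \<alpha> * real_of_int b" if M: "M \<in> P" for M
  proof -
    obtain y' where y': "y' \<in> L - N" "\<forall>w\<in>M. \<not> E y' w" using M unfolding P_def by blast
    have MO: "M \<in> \<C>" "x \<in> M" "M \<inter> N = {}" using M unfolding P_def Ol_def by auto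
    show ?thesis unfolding GG_def
      using lemK[OF x L xL N_def cN MO(1) MO(2) MO(3) _ _ y'(2)] y'(1) by blast
  qed
  have cB: "real (card B) \<le> real (card P) * (\<alpha> * real_of_int b)"
  proof -
    have "card B \<le> (\<Sum>M\<in>P. card (GG M))" unfolding B_def by (rule card_UN_le[OF finP])
    then have "real (card B) \<le> real (\<Sum>M\<in>P. card (GG M))" by (simp only: of_nat_le_iff)
    also have "\<dots> = (\<Sum>M\<in>P. real (card (GG M)))" by (rule of_nat_sum)
    also have "\<dots> \<le> (\<Sum>M\<in>P. \<alpha> * real_of_int b)" using GGb by (intro sum_mono) auto
    finally show ?thesis by simp
  qed
  define f where "f p = (THE M. M \<in> \<C> \<and> x \<in> M \<and> p \<in> M)" for p
  have fp: "f p \<in> \<C> \<and> x \<in> f p \<and> p \<in> f p" if p: "p \<in> N" for p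
  proof -
    have "E x p" using p unfolding N_def by simp
    then have "\<exists>!M. M \<in> \<C> \<and> x \<in> M \<and> p \<in> M" by (rule line_uniq)
    then show ?thesis unfolding f_def by (rule theI')
  qed
  have finj: "inj_on f N"
  proof
    fix p q assume p: "p \<in> N" and q: "q \<in> N" and eq: "f p = f q"
    show "p = q"
    proof (rule ccontr)
      assume "p \<noteq> q"
      have pL: "p \<in> L" "q \<in> L" using p q unfolding N_def by auto
      then have "E p q" using line_adj[OF L] \<open>p \<noteq> q\<close> by simp
      moreover have "p \<in> f p" "q \<in> f p" "f p \<in> \<C>" using fp[OF p] fp[OF q] eq by auto
      ultimately have "f p = L" using line_uniq2[of p q "f p" L] L pL by blast
      then show False using fp[OF p] xL by simp
    qed
  qed
  have fimg: "f ` N \<subseteq> Lx x - Ol"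
  proof
    fix M assume "M \<in> f ` N"
    then obtain p where p: "p \<in> N" "M = f p" by blast
    then have "M \<in> \<C>" "x \<in> M" "p \<in> M" using fp by auto
    then show "M \<in> Lx x - Ol" unfolding Lx_def Ol_def using p by auto
  qed
  have OlLx: "Ol \<subseteq> Lx x" unfolding Ol_def Lx_def by auto
  have "card N \<le> card (Lx x - Ol)"
    using card_inj_on_le[OF finj fimg] finLx by simp
  also have "\<dots> = card (Lx x) - card Ol" using card_Diff_subset[OF finOl OlLx] .
  finally have "card N + card Ol \<le> card (Lx x)" using card_mono[OF finLx OlLx] by linarith
  then have cO: "real (card Ol) \<le> gb D - (1 + \<alpha>)" using Lx_card[OF x] cN by linarith
  have cP: "real (card P) \<le> real (card Ol)" using card_mono[OF finOl PO] by simp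
  have ab: "\<alpha> * real_of_int b \<ge> 0" using alpha_nn b2 by simp
  have "real (card B) \<le> (gb D - (1 + \<alpha>)) * (\<alpha> * real_of_int b)"
    using cB cP cO ab by (meson mult_right_mono order_trans)
  also have "\<dots> < \<beta> - \<alpha>" using ineq by (simp add: algebra_simps)
  also have "\<beta> - \<alpha> = real (card (L - N))"
  proof -
    have "N \<subseteq> L" unfolding N_def by auto
    then have "card (L - N) = card L - card N" using card_Diff_subset finN by blast
    moreover have "card N \<le> card L" using card_mono[OF finL' \<open>N \<subseteq> L\<close>] .
    ultimately show ?thesis using line_card[OF L] cN by (simp add: of_nat_diff)
  qed
  finally have "card B < card (L - N)" by simp
  moreover have "finite B"
  proof -
    have "B \<subseteq> L" unfolding B_def GG_def by auto
    then show ?thesis using finL' finite_subset by blast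
  qed
  ultimately have "\<not> (L - N \<subseteq> B)"
    using card_mono by (metis not_le)
  then obtain y0 where y0: "y0 \<in> L - N" "y0 \<notin> B" by blast
  have y0V: "y0 \<in> V" using line_V[OF L] y0 by blast
  have sub: "line_set E \<C> x y0 \<subseteq> line_set E \<C> x y" if y: "y \<in> L - N" for y
  proof
    fix M assume M: "M \<in> line_set E \<C> x y0"
    have yV: "y \<in> V" using line_V[OF L] y by blast
    have M': "M \<in> \<C>" "x \<in> M" "\<exists>w\<in>M. E y0 w" using M LS_char[OF x y0V dLN[OF y0(1)]] by auto
    have "\<exists>w\<in>M. E y w"
    proof (cases "M \<inter> N = {}")
      case False
      then obtain p where p: "p \<in> M" "p \<in> N" by blast
      have "y \<noteq> p" using y p by auto
      then have "E y p" using line_adj[OF L] y p unfolding N_def by auto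
      then show ?thesis using p by blast
    next
      case True
      then have MO: "M \<in> Ol" unfolding Ol_def using M' by simp
      have "y0 \<in> GG M" unfolding GG_def using y0 M' by simp
      then have "M \<notin> P" using y0(2) unfolding B_def by blast
      then have "\<forall>y'\<in>L - N. \<exists>w\<in>M. E y' w" using MO unfolding P_def by blast
      then show ?thesis using y by blast
    qed
    then show "M \<in> line_set E \<C> x y" using LS_char[OF x yV dLN[OF y]] M' by blast
  qed
  have eq: "line_set E \<C> x y0 = line_set E \<C> x y" if y: "y \<in> L - N" for y
  proof -
    have yV: "y \<in> V" using line_V[OF L] y by blast
    have c1: "real (card (line_set E \<C> x y)) * (1 + \<alpha>) = real (ci 2)"
      using LS_card[OF x yV dLN[OF y]] .
    have c0: "real (card (line_set E \<C> x y0)) * (1 + \<alpha>) = real (ci 2)"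
      using LS_card[OF x y0V dLN[OF y0(1)]] .
    have "real (card (line_set E \<C> x y0)) * (1 + \<alpha>) = real (card (line_set E \<C> x y)) * (1 + \<alpha>)"
      using c1 c0 by simp
    then have "real (card (line_set E \<C> x y0)) = real (card (line_set E \<C> x y))"
      using one_alpha by simp
    then have "card (line_set E \<C> x y0) = card (line_set E \<C> x y)" by simp
    then show ?thesis using card_subset_eq[OF LS_fin sub[OF y]] by simp
  qed
  show ?thesis using eq[OF y1N] eq[OF y2N] by simp
qed

end

theorem theorem18:
  fixes V :: "'a set" and E :: "'a \<Rightarrow> 'a \<Rightarrow> bool" and D :: nat
    and bi ci :: "nat \<Rightarrow> nat" and b :: int and \<alpha> \<beta> :: real and \<C> :: "'a set set"
  assumes drg: "distance_regular V E D bi ci"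
    and cp: "classical_parameters D bi ci b \<alpha> \<beta>"
    and b2: "b \<ge> 2" and D3: "D \<ge> 3"
    and geom: "geometric V E (bi 0) \<C>"
    and ineq: "\<beta> > (gbr b D - \<alpha> - 1) * \<alpha> * real_of_int b + \<alpha>"
  shows "\<forall>x\<in>V. \<forall>L\<in>\<C>. \<forall>y1\<in>L. \<forall>y2\<in>L.
           dist_set E x L = 1 \<and> gdist E x y1 = 2 \<and> gdist E x y2 = 2 \<longrightarrow>
           line_set E \<C> x y1 = line_set E \<C> x y2"
proof -
  interpret drgs V E D bi ci b \<alpha> \<beta> \<C>
    using drg cp b2 D3 geom by (unfold_locales) auto
  show ?thesis using main_loc[OF ineq] by blast
qed

end
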